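(* Let $A$ be a nonempty finite set of positive integers. Then \[ M(\sup A) \le \sum_{d=1}^{\sup A} \mu(d)\, 2^{v(A,d)}, \] and equality holds if and only if $\gcd(A)>1$.
   Context: $\sup A$ is the largest element of $A$. $\mu$ is the Möbius function and $M(N)=\sum_{d=1}^N\mu(d)$ is the Mertens function. For a positive integer $d$, $v(A,d)$ is the number of multiples of $d$ in $A$. *)

theory Defs
  imports "HOL-Computational_Algebra.Computational_Algebra"
begin

definition moebius_mu :: "nat \<Rightarrow> int" where
  "moebius_mu d = (if d = 0 then 0
     else if squarefree d then (-1) ^ card (prime_factors d) else 0)"

definition mertens :: "nat \<Rightarrow> int" where
  "mertens N = (\<Sum>d=1..N. moebius_mu d)"

definition v :: "nat set \<Rightarrow> nat \<Rightarrow> nat" where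
  "v A d = card {a \<in> A. d dvd a}"

end

theory Submission
  imports Defs
begin

lemma pf_prod:
  assumes "finite T" "\<forall>p\<in>T. prime (p::nat)"
  shows "prime_factors (\<Prod>T) = T"
proof -
  have "prime_factors (\<Prod>T) = \<Union>((prime_factors \<circ> (\<lambda>x. x)) ` T)"
    using assms by (intro prime_factors_prod) (auto simp: not_prime_0)
  also have "\<dots> = T" using assms by (auto simp: prime_prime_factors)
  finally show ?thesis .
qed

lemma sf_prod:
  assumes "finite T" "\<forall>p\<in>T. prime (p::nat)"
  shows "squarefree (\<Prod>T)"
  using assms by (intro squarefree_prod_coprime) (auto simp: primes_coprime squarefree_prime)

lemma prod_dvd:
  assumes "(n::nat) > 0" "T \<subseteq> prime_factors n"
  shows "\<Prod>T dvd n"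
proof -
  have "\<Prod>T dvd \<Prod>(prime_factors n)" using assms by (intro prod_dvd_prod_subset) auto
  also have "\<dots> dvd (\<Prod>p \<in> prime_factors n. p ^ multiplicity p n)"
    by (intro prod_dvd_prod) (simp add: prime_factors_multiplicity dvd_power)
  also have "\<dots> = n" using assms by (simp add: prod_prime_factors)
  finally show ?thesis .
qed

lemma sf_eq:
  assumes "squarefree (d::nat)"
  shows "d = \<Prod>(prime_factors d)"
proof -
  have d0: "d \<noteq> 0" using assms by (metis not_squarefree_0)
  have "d = (\<Prod>p \<in> prime_factors d. p ^ multiplicity p d)" using d0 by (simp add: prod_prime_factors)
  also have "\<dots> = \<Prod>(prime_factors d)"
    using squarefree_factorial_semiring'[OF d0] assms by (intro prod.cong) auto
  finally show ?thesis .
qed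

lemma alt_sum:
  assumes "finite P" "P \<noteq> {}"
  shows "(\<Sum>T\<in>Pow P. (-1::int) ^ card T) = 0"
proof -
  have "(\<Prod>x\<in>P. (1::int) - 1) = (\<Sum>X\<in>Pow P. (-1) ^ card X * (\<Prod>x\<in>X. 1) * (\<Prod>x\<in>P-X. 1))"
    by (rule prod_diff_conv_sum[OF assms(1)])
  then show ?thesis using assms by (simp add: power_0_left card_eq_0_iff)
qed

lemma moebius_sum:
  assumes "(n::nat) > 0"
  shows "(\<Sum>d | d dvd n. moebius_mu d) = (if n = 1 then 1 else 0)"
proof -
  define P where "P = prime_factors n"
  have fin: "finite {d. d dvd n}" using assms by simp
  have "(\<Sum>d | d dvd n. moebius_mu d) = (\<Sum>d | d dvd n \<and> squarefree d. moebius_mu d)"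
    using fin by (intro sum.mono_neutral_right) (auto simp: moebius_mu_def)
  also have "{d. d dvd n \<and> squarefree d} = Prod ` Pow P"
  proof (intro equalityI subsetI)
    fix d assume "d \<in> {d. d dvd n \<and> squarefree d}"
    then have d: "d dvd n" "squarefree d" by auto
    have "prime_factors d \<subseteq> P" unfolding P_def using d assms
      by (metis dvd_prime_factors gr_implies_not0)
    then show "d \<in> Prod ` Pow P" using sf_eq[OF d(2)] by blast
  next
    fix d assume "d \<in> Prod ` Pow P"
    then obtain T where T: "T \<subseteq> P" "d = \<Prod>T" by auto
    have "finite T" using T P_def finite_subset by blast
    then show "d \<in> {d. d dvd n \<and> squarefree d}"
      using T prod_dvd[OF assms] sf_prod[of T] unfolding P_def
      by (auto dest: in_prime_factors_imp_prime)
  qed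
  also have "(\<Sum>d\<in>Prod ` Pow P. moebius_mu d) = (\<Sum>T\<in>Pow P. moebius_mu (\<Prod>T))"
  proof (rule sum.reindex_cong[OF _ refl])
    show "inj_on Prod (Pow P)"
    proof (rule inj_onI)
      fix S T assume "S \<in> Pow P" "T \<in> Pow P" "\<Prod>S = \<Prod>T"
      moreover have "finite S" "finite T" using \<open>S \<in> Pow P\<close> \<open>T \<in> Pow P\<close> P_def finite_subset by auto
      ultimately show "S = T" using pf_prod[of S] pf_prod[of T] unfolding P_def
        by (metis PowD in_prime_factors_imp_prime subsetD)
    qed
  qed simp
  also have "\<dots> = (\<Sum>T\<in>Pow P. (-1) ^ card T)"
  proof (rule sum.cong[OF refl])
    fix T assume T: "T \<in> Pow P"
    have "finite T" "\<forall>p\<in>T. prime p" using T P_def finite_subset by auto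
    then show "moebius_mu (\<Prod>T) = (-1) ^ card T"
      using pf_prod sf_prod unfolding moebius_mu_def by auto
  qed
  also have "\<dots> = (if n = 1 then 1 else 0)"
  proof (cases "n = 1")
    case True then show ?thesis by (simp add: P_def)
  next
    case False
    obtain p where "prime p" "p dvd n" using prime_factor_nat[OF False] by blast
    then have "p \<in> P" using assms by (simp add: P_def in_prime_factors_iff)
    then have "P \<noteq> {}" by blast
    then show ?thesis using False alt_sum[of P] P_def by simp
  qed
  finally show ?thesis .
qed

lemma key:
  fixes A :: "nat set"
  assumes "finite A" and "A \<noteq> {}" and "\<forall>a\<in>A. a > 0"
  shows "(\<Sum>d=1..Max A. moebius_mu d * 2 ^ v A d)
     = mertens (Max A) + int (card {S \<in> Pow A. S \<noteq> {} \<and> Gcd S = 1})"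
proof -
  define N where "N = Max A"
  have finP: "finite (Pow A)" using assms by simp
  have "(\<Sum>d=1..N. moebius_mu d * 2 ^ v A d)
      = (\<Sum>d=1..N. \<Sum>S\<in>Pow A. if d dvd Gcd S then moebius_mu d else 0)"
  proof (rule sum.cong[OF refl])
    fix d
    have "Pow {a\<in>A. d dvd a} = {S \<in> Pow A. d dvd Gcd S}"
      by (auto simp: dvd_Gcd_iff)
    moreover have "card (Pow {a\<in>A. d dvd a}) = 2 ^ card {a\<in>A. d dvd a}"
      using assms(1) by (intro card_Pow) simp
    ultimately have "(2::int) ^ v A d = int (card {S \<in> Pow A. d dvd Gcd S})"
      unfolding v_def by simp
    also have "\<dots> = (\<Sum>S\<in>Pow A. if d dvd Gcd S then 1 else 0)"
      using finP by (simp add: sum.If_cases Int_def)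
    finally show "moebius_mu d * 2 ^ v A d = (\<Sum>S\<in>Pow A. if d dvd Gcd S then moebius_mu d else 0)"
      by (simp add: sum_distrib_left if_distrib cong: if_cong)
  qed
  also have "\<dots> = (\<Sum>S\<in>Pow A. \<Sum>d=1..N. if d dvd Gcd S then moebius_mu d else 0)"
    by (rule sum.swap)
  also have "\<dots> = (\<Sum>S\<in>Pow A. if S = {} then mertens N else if Gcd S = 1 then 1 else 0)"
  proof (rule sum.cong[OF refl])
    fix S assume S: "S \<in> Pow A"
    show "(\<Sum>d=1..N. if d dvd Gcd S then moebius_mu d else 0)
        = (if S = {} then mertens N else if Gcd S = 1 then 1 else 0)"
    proof (cases "S = {}")
      case True then show ?thesis by (simp add: mertens_def)
    next
      case False
      then obtain a where a: "a \<in> S" by blast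
      have aA: "a \<in> A" using a S by auto
      have g0: "Gcd S > 0" using a aA assms(3) by (metis Gcd_dvd dvd_0_left_iff neq0_conv)
      have "Gcd S \<le> a" using a aA assms(3) by (metis Gcd_dvd dvd_imp_le)
      also have "a \<le> N" unfolding N_def using aA assms(1) by simp
      finally have gN: "Gcd S \<le> N" .
      have "(\<Sum>d=1..N. if d dvd Gcd S then moebius_mu d else 0)
          = (\<Sum>d\<in>{d\<in>{1..N}. d dvd Gcd S}. moebius_mu d)"
        by (rule sum.inter_filter[symmetric]) simp
      also have "{d\<in>{1..N}. d dvd Gcd S} = {d. d dvd Gcd S}"
      proof (intro equalityI subsetI)
        fix d assume "d \<in> {d. d dvd Gcd S}"
        then have "d dvd Gcd S" by simp
        moreover have "d \<le> Gcd S" "d > 0" using g0 calculation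
          by (auto intro: dvd_imp_le intro!: gr0I)
        ultimately show "d \<in> {d\<in>{1..N}. d dvd Gcd S}" using gN by auto
      qed auto
      also have "(\<Sum>d\<in>{d. d dvd Gcd S}. moebius_mu d) = (if Gcd S = 1 then 1 else 0)"
        using moebius_sum[OF g0] by simp
      finally show ?thesis using False by simp
    qed
  qed
  also have "\<dots> = (\<Sum>S\<in>Pow A. (if S = {} then mertens N else 0)
                    + (if S \<noteq> {} \<and> Gcd S = 1 then 1 else 0))"
    by (rule sum.cong) auto
  also have "\<dots> = mertens N + int (card {S \<in> Pow A. S \<noteq> {} \<and> Gcd S = 1})"
    using finP by (simp add: sum.distrib sum.If_cases Int_def)
  finally show ?thesis unfolding N_def .
qed

theorem theorem4p3:
  fixes A :: "nat set"
  assumes "finite A" and "A \<noteq> {}" and "\<forall>a\<in>A. a > 0"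
  shows "mertens (Max A) \<le> (\<Sum>d=1..Max A. moebius_mu d * 2 ^ v A d)
    \<and> (mertens (Max A) = (\<Sum>d=1..Max A. moebius_mu d * 2 ^ v A d) \<longleftrightarrow> Gcd A > 1)"
proof -
  define X where "X = {S \<in> Pow A. S \<noteq> {} \<and> Gcd S = 1}"
  have K: "(\<Sum>d=1..Max A. moebius_mu d * 2 ^ v A d) = mertens (Max A) + int (card X)"
    using key[OF assms] unfolding X_def .
  have finX: "finite X" using assms(1) unfolding X_def by simp
  have "X = {} \<longleftrightarrow> Gcd A > 1"
  proof
    assume "X = {}"
    then have "Gcd A \<noteq> 1" using assms(2) unfolding X_def by auto
    moreover obtain a where "a \<in> A" using assms(2) by blast
    then have "Gcd A \<noteq> 0" using assms(3) by (metis Gcd_dvd dvd_0_left_iff neq0_conv)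
    ultimately show "Gcd A > 1" by linarith
  next
    assume g: "Gcd A > 1"
    show "X = {}"
    proof (rule ccontr)
      assume "X \<noteq> {}"
      then obtain S where S: "S \<subseteq> A" "Gcd S = 1" unfolding X_def by auto
      have "Gcd A dvd Gcd S" using S(1) by (auto simp: dvd_Gcd_iff intro: Gcd_dvd)
      then show False using S(2) g by simp
    qed
  qed
  then show ?thesis using K finX by auto
qed

end
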